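(* For every $d\in\mathbb{N}$, the number of unlabeled $n$-vertex graphs in $\mathcal{X}_d$ is at least $n^{\frac{(d-2)n}{2}(1-o(1))}$ (as $n\to\infty$).
   Context: For a graph $G$, $s_k(G)$ is the number of unlabeled (isomorphism classes of) $k$-vertex subgraphs. An $n$-vertex graph $G$ is monotone $(c,\mathcal{Y},t)$-tiny if (1) for every integer $1\le k\le t(n)$ every $k$-vertex subgraph of $G$ is in $\mathcal{Y}$, and (2) for every integer $t(n)<k\le n$, $s_k(G)\le c^k$. $\mathcal{S}_d$ is the class of all graphs $G$ such that for every integer $k$ with $1000^{10(d+1)}\le k\le|V(G)|$, every $k$-vertex subgraph of $G$ has at most $k-1+k/\ln k$ edges. Let $c=c(d)$ be a constant such that, for $G_n$ uniform among graphs on $[n]$ with $\lceil d(n-1)/2\rceil$ edges, $\Pr[G_n$ is not monotone $(c,\mathcal{S}_d,\ln^2)$-tiny$]<200\sqrt{d/n}$ for all $n$ (such $c$ exists). Then $\mathcal{X}_d$ is the class of monotone $(c,\mathcal{S}_d,\ln^2)$-tiny unlabeled graphs $G$ having exactly $\lceil d(|V(G)|-1)/2\rceil$ edges, where $\ln^2(n)=(\ln n)^2$. *)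

theory Defs
  imports Complex_Main
begin

type_synonym graph = "nat set \<times> nat set set"

definition graph_on :: "nat set \<Rightarrow> nat set set \<Rightarrow> bool" where
  "graph_on V E \<longleftrightarrow> finite V \<and> E \<subseteq> {e. \<exists>x y. x \<noteq> y \<and> x \<in> V \<and> y \<in> V \<and> e = {x, y}}"

definition is_graph :: "graph \<Rightarrow> bool" where
  "is_graph G \<longleftrightarrow> graph_on (fst G) (snd G)"

definition nverts :: "graph \<Rightarrow> nat" where
  "nverts G = card (fst G)"

definition nedges :: "graph \<Rightarrow> nat" where
  "nedges G = card (snd G)"

definition graph_iso :: "graph \<Rightarrow> graph \<Rightarrow> bool" where
  "graph_iso G H \<longleftrightarrow> (\<exists>f. bij_betw f (fst G) (fst H) \<and>
      (\<forall>x\<in>fst G. \<forall>y\<in>fst G. {x, y} \<in> snd G \<longleftrightarrow> {f x, f y} \<in> snd H))"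

definition iso_rel :: "(graph \<times> graph) set" where
  "iso_rel = {(G, H). graph_iso G H}"

definition num_unlabeled :: "graph set \<Rightarrow> nat" where
  "num_unlabeled A = card (A // iso_rel)"

text \<open>All (not necessarily induced) k-vertex subgraphs of G.\<close>
definition subgraphs :: "nat \<Rightarrow> graph \<Rightarrow> graph set" where
  "subgraphs k G = {(W, F). W \<subseteq> fst G \<and> card W = k \<and> F \<subseteq> snd G \<and> graph_on W F}"

definition s_k :: "nat \<Rightarrow> graph \<Rightarrow> nat" where
  "s_k k G = num_unlabeled (subgraphs k G)"

definition monotone_tiny :: "real \<Rightarrow> (graph \<Rightarrow> bool) \<Rightarrow> (nat \<Rightarrow> real) \<Rightarrow> graph \<Rightarrow> bool" where
  "monotone_tiny c Y t G \<longleftrightarrow>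
     (\<forall>k::nat. 1 \<le> k \<and> real k \<le> t (nverts G) \<longrightarrow> (\<forall>H\<in>subgraphs k G. Y H)) \<and>
     (\<forall>k::nat. t (nverts G) < real k \<and> k \<le> nverts G \<longrightarrow> real (s_k k G) \<le> c ^ k)"

definition S_class :: "nat \<Rightarrow> graph \<Rightarrow> bool" where
  "S_class d G \<longleftrightarrow> (\<forall>k::nat. (1000::nat) ^ (10 * (d + 1)) \<le> k \<and> k \<le> nverts G \<longrightarrow>
      (\<forall>H\<in>subgraphs k G. real (nedges H) \<le> real k - 1 + real k / ln (real k)))"

definition ln2 :: "nat \<Rightarrow> real" where
  "ln2 n = (ln (real n))\<^sup>2"

definition edge_target :: "nat \<Rightarrow> nat \<Rightarrow> nat" where
  "edge_target d n = nat \<lceil>real d * (real n - 1) / 2\<rceil>"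

text \<open>Labeled graphs on vertex set [n] (represented as {0..<n}) with m edges.\<close>
definition labeled_graphs :: "nat \<Rightarrow> nat \<Rightarrow> graph set" where
  "labeled_graphs n m = {G. fst G = {0..<n} \<and> is_graph G \<and> nedges G = m}"

definition prob_not_tiny :: "real \<Rightarrow> nat \<Rightarrow> nat \<Rightarrow> real" where
  "prob_not_tiny c d n =
     real (card {G \<in> labeled_graphs n (edge_target d n). \<not> monotone_tiny c (S_class d) ln2 G})
     / real (card (labeled_graphs n (edge_target d n)))"

definition good_constant :: "nat \<Rightarrow> real \<Rightarrow> bool" where
  "good_constant d c \<longleftrightarrow> (\<forall>n::nat. n \<ge> 1 \<longrightarrow> prob_not_tiny c d n < 200 * sqrt (real d / real n))"

definition X_class :: "nat \<Rightarrow> real \<Rightarrow> graph \<Rightarrow> bool" where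
  "X_class d c G \<longleftrightarrow> is_graph G \<and> monotone_tiny c (S_class d) ln2 G \<and>
      nedges G = edge_target d (nverts G)"

definition count_X :: "nat \<Rightarrow> real \<Rightarrow> nat \<Rightarrow> nat" where
  "count_X d c n = num_unlabeled {G. fst G = {0..<n} \<and> X_class d c G}"

end

theory Submission
  imports Defs "HOL-Combinatorics.Permutations" "HOL-Real_Asymp.Real_Asymp"
begin

lemma fiber_bound:
  assumes G: "fst G = {0..<n}" "is_graph G"
  shows "{H. fst H = {0..<n} \<and> is_graph H \<and> graph_iso G H}
     \<subseteq> (\<lambda>p. ({0..<n}, (\<lambda>e. p ` e) ` snd G)) ` {p. p permutes {0..<n}}"
proof
  fix H assume "H \<in> {H. fst H = {0..<n} \<and> is_graph H \<and> graph_iso G H}"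
  then have H: "fst H = {0..<n}" "is_graph H" "graph_iso G H" by auto
  then obtain f where f: "bij_betw f {0..<n} {0..<n}"
    and fe: "\<forall>x\<in>{0..<n}. \<forall>y\<in>{0..<n}. {x, y} \<in> snd G \<longleftrightarrow> {f x, f y} \<in> snd H"
    using G unfolding graph_iso_def by auto
  define p where "p x = (if x \<in> {0..<n} then f x else x)" for x
  have pb: "bij_betw p {0..<n} {0..<n}"
    using f by (rule bij_betw_cong[THEN iffD1, rotated]) (simp add: p_def)
  have pp: "p permutes {0..<n}"
    unfolding permutes_altdef using pb by (auto simp: p_def)
  have Gs: "snd G \<subseteq> {e. \<exists>x y. x \<noteq> y \<and> x \<in> {0..<n} \<and> y \<in> {0..<n} \<and> e = {x, y}}"
    using G unfolding is_graph_def graph_on_def by auto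
  have Hs: "snd H \<subseteq> {e. \<exists>x y. x \<noteq> y \<and> x \<in> {0..<n} \<and> y \<in> {0..<n} \<and> e = {x, y}}"
    using H unfolding is_graph_def graph_on_def by auto
  have "snd H = (\<lambda>e. p ` e) ` snd G"
  proof
    show "snd H \<subseteq> (\<lambda>e. p ` e) ` snd G"
    proof
      fix e assume e: "e \<in> snd H"
      then obtain a b where ab: "a \<in> {0..<n}" "b \<in> {0..<n}" "e = {a,b}" using Hs by blast
      have fim: "f ` {0..<n} = {0..<n}" using f by (simp add: bij_betw_def)
      have "a \<in> f ` {0..<n}" using ab(1) fim by simp
      then obtain x where x: "x \<in> {0..<n}" "a = f x" by (rule imageE)
      have "b \<in> f ` {0..<n}" using ab(2) fim by simp
      then obtain y where y: "y \<in> {0..<n}" "b = f y" by (rule imageE)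
      have "{f x, f y} \<in> snd H" using e ab(3) x(2) y(2) by simp
      then have xyG: "{x,y} \<in> snd G" using fe x(1) y(1) by blast
      have "p ` {x,y} = {f x, f y}" using x(1) y(1) by (simp add: p_def)
      then have "p ` {x,y} = e" using ab(3) x(2) y(2) by simp
      then show "e \<in> (\<lambda>e. p ` e) ` snd G" using xyG by (metis image_eqI)
    qed
  next
    show "(\<lambda>e. p ` e) ` snd G \<subseteq> snd H"
    proof
      fix e' assume "e' \<in> (\<lambda>e. p ` e) ` snd G"
      then obtain e where e: "e \<in> snd G" "e' = p ` e" by blast
      then obtain x y where xy: "x \<in> {0..<n}" "y \<in> {0..<n}" "e = {x,y}" using Gs by blast
      have "{f x, f y} \<in> snd H" using fe[rule_format, OF xy(1) xy(2)] xy(3) e(1) by simp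
      moreover have "e' = {f x, f y}" using e xy by (auto simp: p_def)
      ultimately show "e' \<in> snd H" by simp
    qed
  qed
  then have "H = ({0..<n}, (\<lambda>e. p ` e) ` snd G)" using H by (metis prod.collapse)
  then show "H \<in> (\<lambda>p. ({0..<n}, (\<lambda>e. p ` e) ` snd G)) ` {p. p permutes {0..<n}}"
    using pp by blast
qed

lemma fiber_card:
  assumes G: "fst G = {0..<n}" "is_graph G"
  shows "card {H. fst H = {0..<n} \<and> is_graph H \<and> graph_iso G H} \<le> fact n"
proof -
  have "card {H. fst H = {0..<n} \<and> is_graph H \<and> graph_iso G H}
     \<le> card ((\<lambda>p. ({0..<n}, (\<lambda>e. p ` e) ` snd G)) ` {p. p permutes {0..<n}})"
    by (rule card_mono[OF finite_imageI fiber_bound[OF G]])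
       (simp add: finite_permutations)
  also have "\<dots> \<le> card {p. p permutes {0..<n}}" by (rule card_image_le) (simp add: finite_permutations)
  also have "\<dots> = fact n" by (rule card_permutations) auto
  finally show ?thesis .
qed

lemma graphs_finite: "finite {G::graph. fst G = {0..<n} \<and> is_graph G}"
proof -
  have "{G::graph. fst G = {0..<n} \<and> is_graph G} \<subseteq> {{0..<n}} \<times> Pow (Pow {0..<n})"
    by (auto simp: is_graph_def graph_on_def)
  then show ?thesis by (rule finite_subset) auto
qed

lemma quotient_bound:
  assumes A: "\<forall>G\<in>A. fst G = {0..<n} \<and> is_graph G"
  shows "card A \<le> card (A // iso_rel) * fact n"
proof -
  have finA: "finite A" using A graphs_finite by (metis (mono_tags, lifting) mem_Collect_eq rev_finite_subset subsetI)
  have finQ: "finite (A // iso_rel)" unfolding quotient_def using finA by auto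
  have refl: "graph_iso x x" for x unfolding graph_iso_def by (rule exI[of _ id]) auto
  have "A \<subseteq> (\<Union>C\<in>A // iso_rel. A \<inter> C)"
  proof
    fix x assume "x \<in> A"
    then show "x \<in> (\<Union>C\<in>A // iso_rel. A \<inter> C)"
      unfolding quotient_def iso_rel_def using refl by blast
  qed
  then have "card A \<le> card (\<Union>C\<in>A // iso_rel. A \<inter> C)"
    by (rule card_mono[rotated]) (use finQ finA in auto)
  also have "\<dots> \<le> (\<Sum>C\<in>A // iso_rel. card (A \<inter> C))" by (rule card_UN_le[OF finQ])
  also have "\<dots> \<le> (\<Sum>C\<in>A // iso_rel. fact n)"
  proof (rule sum_mono)
    fix C assume "C \<in> A // iso_rel"
    then obtain G where G: "G \<in> A" "C = iso_rel `` {G}" unfolding quotient_def by blast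
    have "A \<inter> C \<subseteq> {H. fst H = {0..<n} \<and> is_graph H \<and> graph_iso G H}"
      using G A unfolding iso_rel_def by auto
    then have "card (A \<inter> C) \<le> card {H. fst H = {0..<n} \<and> is_graph H \<and> graph_iso G H}"
      by (rule card_mono[rotated]) (rule finite_subset[OF _ graphs_finite], auto)
    also have "\<dots> \<le> fact n" using fiber_card G A by auto
    finally show "card (A \<inter> C) \<le> fact n" .
  qed
  also have "\<dots> = card (A // iso_rel) * fact n" by simp
  finally show ?thesis .
qed

lemma labeled_card: "card (labeled_graphs n m) = (n choose 2) choose m"
proof -
  define P where "P = {e. \<exists>x y. x \<noteq> y \<and> x \<in> {0..<n} \<and> y \<in> {0..<n} \<and> e = {x, y::nat}}"
  have P: "P = {e. e \<subseteq> {0..<n} \<and> card e = 2}"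
  proof (rule set_eqI, rule iffI)
    fix e assume "e \<in> P"
    then show "e \<in> {e. e \<subseteq> {0..<n} \<and> card e = 2}" unfolding P_def by auto
  next
    fix e assume "e \<in> {e. e \<subseteq> {0..<n} \<and> card e = 2}"
    then obtain x y where "e = {x,y}" "x \<noteq> y" "e \<subseteq> {0..<n}" unfolding card_2_iff by blast
    then show "e \<in> P" unfolding P_def by auto
  qed
  have "labeled_graphs n m = (\<lambda>E. ({0..<n}, E)) ` {E. E \<subseteq> P \<and> card E = m}"
    unfolding labeled_graphs_def is_graph_def graph_on_def nedges_def P_def
    by (auto simp: image_def)
  then have "card (labeled_graphs n m) = card {E. E \<subseteq> P \<and> card E = m}"
    by (simp add: card_image inj_on_def)
  also have "\<dots> = card P choose m"
    by (rule n_subsets) (simp add: P)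
  also have "card P = n choose 2" unfolding P by (subst n_subsets) auto
  finally show ?thesis .
qed


lemma A_eq: "{G. fst G = {0..<n} \<and> X_class d c G}
   = {G \<in> labeled_graphs n (edge_target d n). monotone_tiny c (S_class d) ln2 G}"
  unfolding X_class_def labeled_graphs_def nverts_def by auto

lemma sqrt_small:
  assumes "n \<ge> 1" "160000 * d \<le> n"
  shows "sqrt (real d / real n) \<le> 1/400"
proof -
  have "real d / real n \<le> 1/160000"
    using assms by (simp add: field_simps)
  then have "sqrt (real d / real n) \<le> sqrt (1/160000)" by (rule real_sqrt_le_mono)
  also have "sqrt (1/160000) = (1/400::real)" by (rule real_sqrt_unique) (auto simp: power2_eq_square)
  finally show ?thesis .
qed

lemma count_lower:
  assumes gc: "good_constant d c" and n: "n \<ge> 1" "160000 * d \<le> n"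
  shows "real (count_X d c n) * fact n \<ge> real (card (labeled_graphs n (edge_target d n))) / 2"
proof -
  define Lab where "Lab = labeled_graphs n (edge_target d n)"
  define A where "A = {G \<in> Lab. monotone_tiny c (S_class d) ln2 G}"
  define Bad where "Bad = {G \<in> Lab. \<not> monotone_tiny c (S_class d) ln2 G}"
  have finLab: "finite Lab" unfolding Lab_def labeled_graphs_def
    by (rule finite_subset[OF _ graphs_finite[of n]]) auto
  have card_sum: "card A + card Bad = card Lab"
  proof -
    have "A \<union> Bad = Lab" "A \<inter> Bad = {}" unfolding A_def Bad_def by auto
    then show ?thesis using card_Un_disjoint[of A Bad] finLab
      by (metis finite_Un)
  qed
  have cA: "card A \<le> count_X d c n * fact n"
  proof -
    have "count_X d c n = card (A // iso_rel)"
      unfolding count_X_def num_unlabeled_def A_def Lab_def A_eq ..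
    moreover have "card A \<le> card (A // iso_rel) * fact n"
      by (rule quotient_bound) (auto simp: A_def Lab_def labeled_graphs_def)
    ultimately show ?thesis by simp
  qed
  have half: "real (card A) \<ge> real (card Lab) / 2"
  proof (cases "card Lab = 0")
    case True then show ?thesis by simp
  next
    case False
    have "prob_not_tiny c d n < 200 * sqrt (real d / real n)" using gc n unfolding good_constant_def by auto
    also have "\<dots> \<le> 1/2" using sqrt_small[OF n] by simp
    finally have "real (card Bad) / real (card Lab) < 1/2"
      unfolding prob_not_tiny_def Bad_def Lab_def .
    then have "real (card Bad) < real (card Lab) / 2" using False by (simp add: field_simps)
    then show ?thesis using card_sum by linarith
  qed
  have "real (card A) \<le> real (count_X d c n) * fact n"
    using cA by (metis of_nat_fact of_nat_le_iff of_nat_mult)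
  then show ?thesis using half unfolding Lab_def by linarith
qed


lemma N_real: "real (n choose 2) = real n * (real n - 1) / 2"
proof (cases n)
  case 0 then show ?thesis by simp
next
  case (Suc k)
  have "2 * (n choose 2) = n * (n - 1)"
    unfolding choose_two by (simp add: Suc)
  then have "2 * real (n choose 2) = real n * real (n - 1)"
    by (metis of_nat_mult of_nat_numeral)
  then show ?thesis using Suc by (simp add: of_nat_diff)
qed

lemma m_bounds:
  assumes "n \<ge> 1"
  shows "real d * (real n - 1) / 2 \<le> real (edge_target d n)"
    and "real (edge_target d n) \<le> real d * (real n - 1) / 2 + 1"
proof -
  define x where "x = real d * (real n - 1) / 2"
  have x0: "x \<ge> 0" using assms unfolding x_def by simp
  have "\<lceil>x\<rceil> \<ge> 0" using x0 by simp
  then have e: "real (edge_target d n) = of_int \<lceil>x\<rceil>"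
    unfolding edge_target_def x_def by simp
  show "real d * (real n - 1) / 2 \<le> real (edge_target d n)" using e x_def by simp
  show "real (edge_target d n) \<le> real d * (real n - 1) / 2 + 1" using e x_def by simp
qed

lemma eps_tendsto:
  fixes a b e :: real
  shows "(\<lambda>n::nat. a * (1 / real n) + b * (1 / ln (real n)) + e * (1 / (real n * ln (real n)))) \<longlonglongrightarrow> 0"
proof -
  have 1: "(\<lambda>n::nat. 1 / real n) \<longlonglongrightarrow> 0" by real_asymp
  have 2: "(\<lambda>n::nat. 1 / ln (real n)) \<longlonglongrightarrow> 0" by real_asymp
  have 3: "(\<lambda>n::nat. 1 / (real n * ln (real n))) \<longlonglongrightarrow> 0" by real_asymp
  have "(\<lambda>n::nat. a * (1 / real n) + b * (1 / ln (real n)) + e * (1 / (real n * ln (real n)))) \<longlonglongrightarrow> a * 0 + b * 0 + e * 0"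
    by (intro tendsto_intros 1 2 3)
  then show ?thesis by simp
qed


lemma m_le_N:
  assumes "n \<ge> d + 3"
  shows "edge_target d n \<le> n choose 2"
proof -
  have n1: "n \<ge> 1" using assms by simp
  have "real (edge_target d n) \<le> real d * (real n - 1) / 2 + 1" by (rule m_bounds(2)[OF n1])
  also have "\<dots> \<le> real n * (real n - 1) / 2"
  proof -
    have "3 * 2 \<le> (real n - real d) * (real n - 1)"
      by (rule mult_mono) (use assms in auto)
    then show ?thesis by (simp add: field_simps algebra_simps; linarith)
  qed
  also have "\<dots> = real (n choose 2)" by (rule N_real[symmetric])
  finally show ?thesis by linarith
qed

lemma d_nonzero:
  assumes "good_constant d c" shows "d \<noteq> 0"
proof
  assume d: "d = 0"
  have "prob_not_tiny c d 1 < 200 * sqrt (real d / real (1::nat))"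
    using assms unfolding good_constant_def by auto
  moreover have "prob_not_tiny c d 1 \<ge> 0" unfolding prob_not_tiny_def by simp
  ultimately show False using d by simp
qed

theorem mainTheorem15:
  fixes d :: nat and c :: real
  assumes "good_constant d c"
  shows "\<exists>\<epsilon> :: nat \<Rightarrow> real. \<epsilon> \<longlonglongrightarrow> 0 \<and>
     (\<forall>\<^sub>F n in sequentially.
        real (count_X d c n) \<ge> real n powr ((real d - 2) * real n / 2 * (1 - \<epsilon> n)))"
proof -
  have d0: "d \<noteq> 0" by (rule d_nonzero[OF assms])
  have base: "real (count_X d c n) * fact n \<ge> real ((n choose 2) choose (edge_target d n)) / 2"
    if "n \<ge> 160000 * d + 2 * d + 3" for n
    using count_lower[OF assms, of n] that labeled_card[of n "edge_target d n"] by auto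
  show ?thesis
  proof (cases "d \<le> 2")
    case True
    show ?thesis
    proof (intro exI conjI)
      show "(\<lambda>_. 0::real) \<longlonglongrightarrow> 0" by simp
      show "\<forall>\<^sub>F n in sequentially.
        real (count_X d c n) \<ge> real n powr ((real d - 2) * real n / 2 * (1 - 0))"
        unfolding eventually_sequentially
      proof (intro exI allI impI)
        fix n assume n: "n \<ge> 160000 * d + 2 * d + 3"
        have "edge_target d n \<le> n choose 2" by (rule m_le_N) (use n in auto)
        then have "(n choose 2) choose (edge_target d n) \<ge> 1"
          by (simp add: Suc_leI)
        then have "real (count_X d c n) * fact n > 0" using base[OF n] by linarith
        then have "count_X d c n > 0" by (simp add: zero_less_mult_iff)
        then have c1: "real (count_X d c n) \<ge> 1" by simp
        have "real n powr ((real d - 2) * real n / 2 * (1 - 0)) \<le> real n powr 0"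
          by (rule powr_mono) (use n True in \<open>auto simp: mult_nonpos_nonneg\<close>)
        also have "\<dots> = 1" using n by simp
        finally show "real (count_X d c n) \<ge> real n powr ((real d - 2) * real n / 2 * (1 - 0))"
          using c1 by linarith
      qed
    qed
  next
    case False
    then have d3: "d \<ge> 3" by simp
    define D where "D = real d - 2"
    have D0: "D > 0" using d3 unfolding D_def by simp
    define a where "a = real d / D"
    define b where "b = real d * ln (2 * real d) / D"
    define e where "e = 2 * ln 2 / D"
    define \<epsilon> where "\<epsilon> = (\<lambda>n::nat. a * (1 / real n) + b * (1 / ln (real n)) + e * (1 / (real n * ln (real n))))"
    show ?thesis
    proof (intro exI conjI)
      show "\<epsilon> \<longlonglongrightarrow> 0" unfolding \<epsilon>_def by (rule eps_tendsto)
      show "\<forall>\<^sub>F n in sequentially.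
        real (count_X d c n) \<ge> real n powr ((real d - 2) * real n / 2 * (1 - \<epsilon> n))"
        unfolding eventually_sequentially
      proof (intro exI allI impI)
        fix n assume n: "n \<ge> 160000 * d + 2 * d + 3"
        define m where "m = edge_target d n"
        define N where "N = n choose 2"
        define r where "r = real n"
        define l where "l = ln r"
        define L2 where "L2 = ln (2 * real d)"
        have r2: "r \<ge> 2 * real d + 3" using n unfolding r_def by simp
        have r0: "r > 0" using r2 by simp
        have l0: "l > 0" unfolding l_def using r2 by simp
        have L20: "L2 \<ge> 0" unfolding L2_def using d3 by simp
        have n1: "n \<ge> 1" using n by simp
        have mN: "m \<le> N" unfolding m_def N_def by (rule m_le_N) (use n in auto)
        have mlo: "real d * (r - 1) / 2 \<le> real m" using m_bounds(1)[OF n1] unfolding m_def r_def .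
        have mhi: "real m \<le> real d * (r - 1) / 2 + 1" using m_bounds(2)[OF n1] unfolding m_def r_def .
        have Nr: "real N = r * (r - 1) / 2" unfolding N_def r_def by (rule N_real)
        have dr: "real d * (r - 1) = real d * r - real d" by (simp add: algebra_simps)
        have mhi2: "real m \<le> real d * r / 2" proof -
          have "real d \<ge> 3" using d3 by simp
          then show ?thesis using mhi dr by (simp add: field_simps)
        qed
        have mpos: "real m > 0"
        proof -
          have "0 < real d * (r - 1) / 2" using d3 r2 by simp
          then show ?thesis using mlo by linarith
        qed
        have ratio: "r / (2 * real d) \<le> real N / real m"
        proof -
          have "r * real m \<le> r * (real d * r / 2)" by (rule mult_left_mono[OF mhi2]) (use r0 in simp)
          also have "\<dots> = (real d * r) * (r / 2)" by simp
          also have "\<dots> \<le> (real d * r) * (r - 1)" by (rule mult_left_mono) (use r2 d3 in auto)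
          also have "\<dots> = 2 * real d * real N" unfolding Nr by simp
          finally have "r * real m \<le> 2 * real d * real N" .
          then show ?thesis using mpos d3 by (simp add: field_simps)
        qed
        have ratio1: "r / (2 * real d) \<ge> 1" using r2 d3 by (simp add: field_simps)
        have lnratio: "ln (real N / real m) \<ge> l - L2"
        proof -
          have "ln (r / (2 * real d)) \<le> ln (real N / real m)"
            using ratio ratio1 by (subst ln_le_cancel_iff) auto
          moreover have "ln (r / (2 * real d)) = l - L2"
            unfolding l_def L2_def using r0 d3 by (simp add: ln_div)
          ultimately show ?thesis by simp
        qed
        have lL: "l - L2 \<ge> 0"
          using ratio1 r0 d3 unfolding l_def L2_def by (simp add: ln_div[symmetric])
        have step1: "real m * ln (real N / real m) \<ge> real d * (r - 1) / 2 * (l - L2)"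
          by (rule mult_mono[OF mlo lnratio]) (use mpos lL in auto)
        define Lb where "Lb = real (N choose m)"
        have Lb1: "(real N / real m) ^ m \<le> Lb"
          unfolding Lb_def by (rule binomial_ge_n_over_k_pow_k[OF mN])
        have Npos: "real N > 0" using mN mpos by simp
        have powpos: "(real N / real m) ^ m > 0" using Npos mpos by simp
        have lnLb: "ln Lb \<ge> real m * ln (real N / real m)"
        proof -
          have "ln ((real N / real m) ^ m) \<le> ln Lb" using Lb1 powpos by (subst ln_le_cancel_iff) auto
          moreover have "ln ((real N / real m) ^ m) = real m * ln (real N / real m)"
            using Npos mpos by (simp add: ln_realpow)
          ultimately show ?thesis by simp
        qed
        have Lbpos: "Lb > 0" using Lb1 powpos by linarith
        define C where "C = real (count_X d c n)"
        have CL: "C * fact n \<ge> Lb / 2" using base[OF n] unfolding C_def Lb_def N_def m_def .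
        have factpos: "(fact n :: real) > 0" by simp
        have Cpos: "C > 0"
        proof -
          have "C * fact n > 0" using CL Lbpos by linarith
          then show ?thesis using factpos C_def by (simp add: zero_less_mult_iff)
        qed
        have lnC: "ln C + ln (fact n) \<ge> ln Lb - ln 2"
        proof -
          have "ln (Lb / 2) \<le> ln (C * fact n)" using CL Lbpos by (subst ln_le_cancel_iff) auto
          then show ?thesis using Lbpos Cpos factpos by (simp add: ln_mult ln_div)
        qed
        have lnfact: "ln (fact n :: real) \<le> r * l"
        proof -
          have "(fact n :: real) \<le> real n ^ n" using fact_le_power[where 'a=real, of n] by simp
          then have "ln (fact n :: real) \<le> ln (real n ^ n)" using factpos by (subst ln_le_cancel_iff) (auto simp: r_def)
          also have "\<dots> = r * l" unfolding r_def l_def using r0 r_def by (simp add: ln_realpow)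
          finally show ?thesis .
        qed
        have lowC: "ln C \<ge> real d * (r - 1) / 2 * (l - L2) - ln 2 - r * l"
          using lnC lnfact lnLb step1 by linarith
        define X where "X = (real d - 2) * real n / 2 * (1 - \<epsilon> n)"
        have Xl: "X * l = D * r / 2 * l - (real d / 2 * l + real d * L2 * r / 2 + ln 2)"
          unfolding X_def \<epsilon>_def a_def b_def e_def D_def[symmetric] r_def[symmetric] l_def[symmetric] L2_def[symmetric]
          using D0 r0 l0 by (simp add: field_simps)
        have alg: "real d * (r - 1) / 2 * (l - L2) - ln 2 - r * l
            - (D * r / 2 * l - (real d / 2 * l + real d * L2 * r / 2 + ln 2)) = real d * L2 / 2"
          unfolding D_def by (simp add: field_simps)
        have "X * l \<le> ln C" using lowC alg Xl L20 d3
          by (smt (verit) divide_nonneg_nonneg mult_nonneg_nonneg of_nat_0_le_iff)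
        then have "exp (X * l) \<le> C" using Cpos by (metis exp_le_cancel_iff exp_ln)
        moreover have "real n powr X = exp (X * l)" unfolding powr_def l_def r_def using r0 r_def by simp
        ultimately show "real (count_X d c n) \<ge> real n powr ((real d - 2) * real n / 2 * (1 - \<epsilon> n))"
          unfolding X_def C_def by simp
      qed
    qed
  qed
qed

end
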